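(* Let $(y_1,y_2,q)\in\widetilde{\mathbb G}_3$ with $|y_2|\le|y_1|$. Then $$\frac{|3y_2-3\bar y_1q|+|y_1y_2-9q|}{9-|y_1|^2}\le\frac{|3y_1-3\bar y_2q|+|y_1y_2-9q|}{9-|y_2|^2}.$$
   Context: $\mathbb D$ is the open unit disc. $\widetilde{\mathbb G}_3=\{(\beta_1+\bar\beta_2q,\ \beta_2+\bar\beta_1q,\ q): q\in\mathbb D,\ \beta_1,\beta_2\in\mathbb C,\ |\beta_1|+|\beta_2|<3\}$. *)

theory Defs
  imports "HOL-Analysis.Analysis"
begin

definition G3tilde :: "(complex \<times> complex \<times> complex) set" where
  "G3tilde = {(\<beta>1 + cnj \<beta>2 * q, \<beta>2 + cnj \<beta>1 * q, q) | \<beta>1 \<beta>2 q.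
                 q \<in> ball 0 1 \<and> norm \<beta>1 + norm \<beta>2 < 3}"

end

theory Submission
  imports Defs
begin

lemma nsq: "(cmod (b1 + cnj b2 * q))\<^sup>2 = (cmod b1)\<^sup>2 + (cmod b2)\<^sup>2 * (cmod q)\<^sup>2 + 2 * Re (b1 * b2 * cnj q)"
  unfolding cmod_power2 by (simp add: algebra_simps power2_eq_square)

lemma Kid:
  fixes p q :: complex and m u :: real
  assumes "u\<^sup>2 = (cmod p)\<^sup>2"
  shows "(cmod (p + cnj p * q^2 - of_real m * q))\<^sup>2 =
     (m - u * (1 - (cmod q)\<^sup>2) - 2 * Re (p * cnj q))\<^sup>2
     - (1 - (cmod q)\<^sup>2) * (m - 2*u) * (m - 2 * Re (p * cnj q))"
proof -
  have u2: "u*u = Re p * Re p + Im p * Im p" using assms unfolding cmod_power2 by (simp add: power2_eq_square)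
  show ?thesis unfolding cmod_power2
    apply (simp add: algebra_simps power2_eq_square)
    using u2 by algebra
qed

theorem mainTheorem15:
  fixes y1 y2 q :: complex
  assumes "(y1, y2, q) \<in> G3tilde"
    and "norm y2 \<le> norm y1"
  shows "(norm (3 * y2 - 3 * cnj y1 * q) + norm (y1 * y2 - 9 * q)) / (9 - (norm y1)\<^sup>2)
         \<le> (norm (3 * y1 - 3 * cnj y2 * q) + norm (y1 * y2 - 9 * q)) / (9 - (norm y2)\<^sup>2)"
proof -
  obtain b1 b2 where y1: "y1 = b1 + cnj b2 * q" and y2: "y2 = b2 + cnj b1 * q"
    and qr: "cmod q < 1" and st3: "cmod b1 + cmod b2 < 3"
    using assms(1) unfolding G3tilde_def by auto
  define s where "s = cmod b1"
  define t where "t = cmod b2"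
  define r where "r = cmod q"
  define D where "D = 1 - r\<^sup>2"
  define c where "c = 2 * Re (b1 * b2 * cnj q)"
  define K where "K = cmod (y1 * y2 - 9 * q)"
  define m where "m = 9 - s\<^sup>2 - t\<^sup>2"
  define Bk where "Bk = m - s*t*D - c"
  have s0: "s \<ge> 0" and t0: "t \<ge> 0" and r0: "r \<ge> 0" using s_def t_def r_def by auto
  have r1: "r < 1" using qr r_def by simp
  have D0: "D > 0" using D_def r0 r1 by (simp add: power_less_one_iff abs_square_less_1)
  have stl: "s + t < 3" using st3 s_def t_def by simp
  have cb: "c \<le> 2 * s * t * r"
  proof -
    have "Re (b1 * b2 * cnj q) \<le> cmod (b1 * b2 * cnj q)" by (rule complex_Re_le_cmod)
    thus ?thesis using c_def s_def t_def r_def by (simp add: norm_mult)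
  qed
  have ny1: "(cmod y1)\<^sup>2 = s\<^sup>2 + t\<^sup>2 * r\<^sup>2 + c"
    using nsq[of b1 b2 q] y1 s_def t_def r_def c_def by simp
  have ny2: "(cmod y2)\<^sup>2 = t\<^sup>2 + s\<^sup>2 * r\<^sup>2 + c"
    using nsq[of b2 b1 q] y2 s_def t_def r_def c_def by (simp add: mult.commute)
  have hq: "cnj q * q = of_real (r\<^sup>2)" unfolding r_def
    by (metis complex_norm_square mult.commute of_real_power)
  have e1: "3 * y1 - 3 * cnj y2 * q = 3 * of_real D * b1"
  proof -
    have "3 * y1 - 3 * cnj y2 * q = 3*(b1 - b1*(cnj q * q))" unfolding y1 y2 by (simp add: algebra_simps)
    also have "... = 3 * of_real D * b1" unfolding hq D_def by (simp add: algebra_simps)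
    finally show ?thesis .
  qed
  have e2: "3 * y2 - 3 * cnj y1 * q = 3 * of_real D * b2"
  proof -
    have "3 * y2 - 3 * cnj y1 * q = 3*(b2 - b2*(cnj q * q))" unfolding y1 y2 by (simp add: algebra_simps)
    also have "... = 3 * of_real D * b2" unfolding hq D_def by (simp add: algebra_simps)
    finally show ?thesis .
  qed
  have n1: "norm (3 * y1 - 3 * cnj y2 * q) = 3 * D * s"
    unfolding e1 using D0 s_def by (simp add: norm_mult)
  have n2: "norm (3 * y2 - 3 * cnj y1 * q) = 3 * D * t"
    unfolding e2 using D0 t_def by (simp add: norm_mult)
  have ek: "y1 * y2 - 9 * q = b1*b2 + cnj (b1*b2) * q^2 - of_real m * q"
  proof -
    have h1: "b1 * cnj b1 = of_real (s\<^sup>2)" unfolding s_def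
      by (metis complex_norm_square of_real_power)
    have h2: "b2 * cnj b2 = of_real (t\<^sup>2)" unfolding t_def
      by (metis complex_norm_square of_real_power)
    have "y1 * y2 - 9 * q = b1*b2 + cnj (b1*b2) * q^2 - (9 - b1 * cnj b1 - b2 * cnj b2) * q"
      unfolding y1 y2 by (simp add: algebra_simps power2_eq_square)
    thus ?thesis unfolding h1 h2 m_def by simp
  qed
  have K2: "K\<^sup>2 = Bk\<^sup>2 - D * (m - 2*(s*t)) * (m - c)"
  proof -
    have "(s*t)\<^sup>2 = (cmod (b1*b2))\<^sup>2" using s_def t_def by (simp add: norm_mult)
    from Kid[OF this, of q m] show ?thesis
      unfolding K_def ek Bk_def D_def r_def c_def by simp
  qed
  have sq: "(s+t)\<^sup>2 < 9"
  proof -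
    have "(s+t)\<^sup>2 < 3\<^sup>2" using stl s0 t0 by (intro power_strict_mono) auto
    thus ?thesis by simp
  qed
  have m2: "m - 2*(s*t) > 0" using sq unfolding m_def by (simp add: power2_eq_square algebra_simps)
  have str: "s*t*r \<le> s*t" using r1 s0 t0 by (simp add: mult_left_le)
  have mc: "m - c > 0" using m2 cb str by linarith
  have Bkpos: "Bk > 0"
  proof -
    have "s*t*D \<le> s*t" using D_def r0 s0 t0 by (simp add: mult_left_le)
    moreover have "s*t*D + c \<le> 2 * s * t"
    proof -
      have a: "s*t*D + c \<le> s*t*(D + 2*r)" using cb by (simp add: algebra_simps)
      have "0 \<le> (r-1)\<^sup>2" by simp
      hence "D + 2*r \<le> 2" unfolding D_def by (simp add: power2_eq_square algebra_simps)
      hence "s*t*(D + 2*r) \<le> s*t*2" using s0 t0 by (intro mult_left_mono) auto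
      thus ?thesis using a by linarith
    qed
    ultimately show ?thesis using m2 Bk_def by linarith
  qed
  have K0: "K \<ge> 0" using K_def by simp
  have KB: "K \<le> Bk"
  proof -
    have "K\<^sup>2 \<le> Bk\<^sup>2" using K2 D0 m2 mc by (simp add: mult_pos_pos)
    thus ?thesis using K0 Bkpos by (simp add: power2_le_iff_abs_le)
  qed
  have dd: "(cmod y1)\<^sup>2 - (cmod y2)\<^sup>2 = (s\<^sup>2 - t\<^sup>2) * D"
    unfolding ny1 ny2 D_def by (simp add: algebra_simps)
  have ts: "t \<le> s"
  proof -
    have "(cmod y2)\<^sup>2 \<le> (cmod y1)\<^sup>2" using assms(2) by (simp add: power_mono)
    hence "0 \<le> (s\<^sup>2 - t\<^sup>2) * D" using dd by linarith
    hence "0 \<le> s\<^sup>2 - t\<^sup>2" using D0 by (simp add: zero_le_mult_iff)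
    thus ?thesis using s0 t0 by (simp add: power2_le_iff_abs_le)
  qed
  define A where "A = 9 - (cmod y1)\<^sup>2"
  define B where "B = 9 - (cmod y2)\<^sup>2"
  have Apos: "A > 0"
  proof -
    have "(s + t*r)\<^sup>2 < 9"
    proof -
      have "t*r \<le> t" using t0 r1 by (simp add: mult_left_le)
      hence "(s+t*r)\<^sup>2 < 3\<^sup>2" using stl s0 t0 r0 by (intro power_strict_mono) auto
      thus ?thesis by simp
    qed
    thus ?thesis using A_def ny1 cb by (simp add: power2_eq_square algebra_simps)
  qed
  have BA: "B - A = (s\<^sup>2 - t\<^sup>2) * D" using dd A_def B_def by simp
  have Bpos: "B > 0" using Apos BA ts s0 t0 D0
  proof -
    have "t\<^sup>2 \<le> s\<^sup>2" using ts t0 by (simp add: power_mono)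
    hence "0 \<le> (s\<^sup>2 - t\<^sup>2) * D" using D0 by simp
    thus ?thesis using Apos BA by linarith
  qed
  have key: "s*A - t*B = (s - t) * Bk"
    unfolding A_def B_def ny1 ny2 Bk_def m_def D_def by (simp add: algebra_simps power2_eq_square)
  have goal: "(3 * D * t + K) * B \<le> (3 * D * s + K) * A"
  proof -
    have "(3 * D * s + K) * A - (3 * D * t + K) * B = 3*D*(s*A - t*B) - K*(B - A)"
      by (simp add: algebra_simps)
    also have "... = D * (s - t) * (3*Bk - K*(s+t))"
      unfolding key BA by (simp add: algebra_simps power2_eq_square)
    also have "... \<ge> 0"
    proof -
      have "K*(s+t) \<le> Bk * 3" using KB stl K0 s0 t0 Bkpos
        by (intro mult_mono) auto
      thus ?thesis using D0 ts by (simp add: mult_nonneg_nonneg)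
    qed
    finally show ?thesis by simp
  qed
  show ?thesis
    unfolding n1 n2 K_def[symmetric] A_def[symmetric] B_def[symmetric]
    using goal Apos Bpos by (simp add: divide_simps)
qed

end
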